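(* Let $A$ be the $8\times 8$ adjacency matrix of Ashley's graph, the directed graph on vertices $v_1,\dots,v_8$ with exactly the following 16 edges: $v_1\to v_1$, $v_1\to v_3$, $v_2\to v_2$, $v_2\to v_1$, $v_3\to v_5$, $v_3\to v_6$, $v_4\to v_2$, $v_4\to v_8$, $v_5\to v_7$, $v_5\to v_4$, $v_6\to v_4$, $v_6\to v_5$, $v_7\to v_8$, $v_7\to v_3$, $v_8\to v_6$, $v_8\to v_7$. Then $A$ is unitally shift equivalent to the $1\times1$ matrix $(2)$.
   Context: Two square $\mathbb{N}$-matrices $A,B$ are shift equivalent if there are an integer $\ell\ge1$ and rectangular $\mathbb{N}$-matrices $R,S$ with $A^\ell=RS$, $B^\ell=SR$, $AR=RB$, $BS=SA$. Such a shift equivalence $(R,S)$ is unital if there are $m,k\in\mathbb{N}$ with $(B^t)^mR^t\underline{1}=(B^t)^{m+k}\underline{1}$, where $\underline1$ is the all-ones column vector. $A$ and $B$ are unitally shift equivalent if a unital shift equivalence from $A$ to $B$ exists. *)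

theory Defs
  imports "Jordan_Normal_Form.Matrix"
begin

definition shift_equivalence :: "nat mat \<Rightarrow> nat mat \<Rightarrow> nat \<Rightarrow> nat mat \<Rightarrow> nat mat \<Rightarrow> bool" where
  "shift_equivalence A B l R S \<longleftrightarrow>
     (\<exists>n p. A \<in> carrier_mat n n \<and> B \<in> carrier_mat p p \<and>
            R \<in> carrier_mat n p \<and> S \<in> carrier_mat p n \<and>
            l \<ge> 1 \<and> A ^\<^sub>m l = R * S \<and> B ^\<^sub>m l = S * R \<and>
            A * R = R * B \<and> B * S = S * A)"

definition ones_vec :: "nat \<Rightarrow> nat vec" where
  "ones_vec n = vec n (\<lambda>_. 1)"

definition unital_shift_equivalence :: "nat mat \<Rightarrow> nat mat \<Rightarrow> nat \<Rightarrow> nat mat \<Rightarrow> nat mat \<Rightarrow> bool" where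
  "unital_shift_equivalence A B l R S \<longleftrightarrow>
     shift_equivalence A B l R S \<and>
     (\<exists>m k. ((transpose_mat B) ^\<^sub>m m) *\<^sub>v ((transpose_mat R) *\<^sub>v ones_vec (dim_row R))
            = ((transpose_mat B) ^\<^sub>m (m + k)) *\<^sub>v ones_vec (dim_row B))"

definition unitally_shift_equivalent :: "nat mat \<Rightarrow> nat mat \<Rightarrow> bool" where
  "unitally_shift_equivalent A B \<longleftrightarrow> (\<exists>l R S. unital_shift_equivalence A B l R S)"

text \<open>Ashley's graph: vertices v_1..v_8 are indices 0..7; edge v_i -> v_j is the pair (i-1, j-1).\<close>

definition ashley_edges :: "(nat \<times> nat) set" where
  "ashley_edges = {(0,0), (0,2), (1,1), (1,0), (2,4), (2,5), (3,1), (3,7),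
                   (4,6), (4,3), (5,3), (5,4), (6,7), (6,2), (7,5), (7,6)}"

definition ashley_matrix :: "nat mat" where
  "ashley_matrix = mat 8 8 (\<lambda>(i, j). if (i, j) \<in> ashley_edges then 1 else 0)"

end

theory Submission
  imports Defs "Jordan_Normal_Form.Matrix_IArray_Impl"
begin

lemma pow6: "ashley_matrix ^\<^sub>m 6 = mat 8 8 (\<lambda>_. 8)"
  unfolding ashley_matrix_def ashley_edges_def by code_simp

lemma AR: "ashley_matrix * mat 8 1 (\<lambda>_. 1) = mat 8 1 (\<lambda>_. 1) * mat 1 1 (\<lambda>_. 2)"
  unfolding ashley_matrix_def ashley_edges_def by code_simp

lemma SA: "mat 1 1 (\<lambda>_. 2) * mat 1 8 (\<lambda>_. 8) = mat 1 8 (\<lambda>_. 8) * ashley_matrix"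
  unfolding ashley_matrix_def ashley_edges_def by code_simp

lemma RS: "mat 8 1 (\<lambda>_. 1) * mat 1 8 (\<lambda>_. 8) = mat 8 8 (\<lambda>_. (8::nat))"
  by code_simp

lemma SR: "mat 1 1 (\<lambda>_. 2) ^\<^sub>m 6 = mat 1 8 (\<lambda>_. 8) * mat 8 1 (\<lambda>_. (1::nat))"
  by code_simp

lemma unit: "((transpose_mat (mat 1 1 (\<lambda>_. 2))) ^\<^sub>m 0) *\<^sub>v ((transpose_mat (mat 8 1 (\<lambda>_. 1))) *\<^sub>v ones_vec (dim_row (mat 8 1 (\<lambda>_. (1::nat)))))
            = ((transpose_mat (mat 1 1 (\<lambda>_. 2))) ^\<^sub>m (0 + 3)) *\<^sub>v ones_vec (dim_row (mat 1 1 (\<lambda>_. (2::nat))))"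
  unfolding ones_vec_def by code_simp

theorem mainTheorem11:
  shows "unitally_shift_equivalent ashley_matrix (mat 1 1 (\<lambda>_. 2))"
  unfolding unitally_shift_equivalent_def
proof (intro exI)
  show "unital_shift_equivalence ashley_matrix (mat 1 1 (\<lambda>_. 2)) 6 (mat 8 1 (\<lambda>_. 1)) (mat 1 8 (\<lambda>_. 8))"
    unfolding unital_shift_equivalence_def shift_equivalence_def
    apply (rule conjI)
     apply (rule exI[of _ 8], rule exI[of _ 1])
     apply (intro conjI)
    using pow6 RS AR SA SR
             apply (simp_all add: ashley_matrix_def)
    apply (rule exI[of _ 0], rule exI[of _ 3])
    using unit by simp
qed

end
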